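(* Let $m\ge3$, $\mu\ge0$, and $c\in\mathbb{R}^m_{\ge0}$. For any demand vectors $d=(d_L,d_R)$ and $d'=(d'_L,d'_R)$ with $d_L,d'_L\in\Delta^L$ and $d_R,d'_R\in\Delta^R$, $$\mathrm{OPT}_\mu(d)\le\mathrm{OPT}_\mu(d')+\big(2\|c\|_\infty+66\mu\log m\big)\|d-d'\|_1+\mu m^{-30}.$$
   Context: $L,R$ are finite nonempty sets, $m=|L||R|$, and coordinates of $\mathbb{R}^m$ are indexed by pairs $(i,j)\in L\times R$. $\mathbf{B}\in\{0,1\}^{m\times(|L|+|R|)}$ is the unsigned edge-vertex incidence matrix of the complete bipartite graph on $L\cup R$: $\mathbf{B}_{(i,j),v}=1$ iff $v\in\{i,j\}$. $H(x)=\sum_i x_i\log x_i$ ($0\log0=0$, natural log). $\mathrm{OPT}_\mu(d)=\min_{x\in\Delta^m,\ \mathbf{B}^\top x=d}\ \langle c,x\rangle+\mu H(x)$. $\Delta^k$ denotes the probability simplex. *)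

theory Defs
  imports "HOL-Analysis.Analysis"
begin

definition xlogx :: "real \<Rightarrow> real" where
  "xlogx t = (if t = 0 then 0 else t * ln t)"

definition negent :: "'a set \<Rightarrow> 'b set \<Rightarrow> ('a \<times> 'b \<Rightarrow> real) \<Rightarrow> real" where
  "negent L R x = (\<Sum>e\<in>L \<times> R. xlogx (x e))"

definition in_simplex :: "'i set \<Rightarrow> ('i \<Rightarrow> real) \<Rightarrow> bool" where
  "in_simplex I p \<longleftrightarrow> (\<forall>i\<in>I. 0 \<le> p i) \<and> (\<Sum>i\<in>I. p i) = 1"

text \<open>Feasibility: x in the simplex over L x R and B^T x = d, where B is the unsigned
  edge-vertex incidence matrix of the complete bipartite graph; i.e. row sums equal d_L
  and column sums equal d_R.\<close>
definition feasible :: "'a set \<Rightarrow> 'b set \<Rightarrow> ('a \<Rightarrow> real) \<Rightarrow> ('b \<Rightarrow> real)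
     \<Rightarrow> ('a \<times> 'b \<Rightarrow> real) \<Rightarrow> bool" where
  "feasible L R dL dR x \<longleftrightarrow> in_simplex (L \<times> R) x
     \<and> (\<forall>i\<in>L. (\<Sum>j\<in>R. x (i, j)) = dL i)
     \<and> (\<forall>j\<in>R. (\<Sum>i\<in>L. x (i, j)) = dR j)"

definition objective :: "'a set \<Rightarrow> 'b set \<Rightarrow> ('a \<times> 'b \<Rightarrow> real) \<Rightarrow> real
     \<Rightarrow> ('a \<times> 'b \<Rightarrow> real) \<Rightarrow> real" where
  "objective L R c \<mu> x = (\<Sum>e\<in>L \<times> R. c e * x e) + \<mu> * negent L R x"

text \<open>OPT_mu(d): the minimum (attained: compact nonempty feasible set, continuous objective),
  written as the infimum of the objective over feasible points.\<close>
definition OPT :: "'a set \<Rightarrow> 'b set \<Rightarrow> ('a \<times> 'b \<Rightarrow> real) \<Rightarrow> real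
     \<Rightarrow> ('a \<Rightarrow> real) \<Rightarrow> ('b \<Rightarrow> real) \<Rightarrow> real" where
  "OPT L R c \<mu> dL dR = Inf (objective L R c \<mu> ` {x. feasible L R dL dR x})"

end

theory Submission
  imports Defs
begin

lemma xlogx_ge: "0 \<le> t \<Longrightarrow> xlogx t \<ge> -1"
proof -
  assume t: "0 \<le> t"
  show ?thesis
  proof (cases "t = 0")
    case False
    then have tp: "t > 0" using t by simp
    have "ln (inverse t) \<le> inverse t - 1" using ln_le_minus_one tp by simp
    then have "- ln t \<le> inverse t - 1" by (simp add: ln_inverse)
    then have "t * (- ln t) \<le> t * (inverse t - 1)" using tp by (intro mult_left_mono) auto
    then have "- (t * ln t) \<le> 1 - t" using tp by (simp add: algebra_simps)
    then show ?thesis using False t unfolding xlogx_def by simp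
  qed (simp add: xlogx_def)
qed

lemma xlogx_add: assumes "0 \<le> u" "0 \<le> v" "u + v \<le> 1"
  shows "xlogx (u + v) \<le> xlogx u + v"
proof (cases "u = 0")
  case True
  show ?thesis
  proof (cases "v = 0")
    case False
    then have "v > 0" using assms by simp
    then have "ln v \<le> 0" using assms True by simp
    then have "v * ln v \<le> 0" using \<open>v > 0\<close> by (simp add: mult_nonneg_nonpos)
    then have "v * ln v \<le> v" using assms by linarith
    then show ?thesis using True False unfolding xlogx_def by simp
  qed (simp add: True xlogx_def)
next
  case False
  then have up: "u > 0" using assms by simp
  have l1: "ln (u + v) \<le> 0" using assms up by simp
  have "ln ((u+v)/u) \<le> (u+v)/u - 1" using up assms by (intro ln_le_minus_one) auto
  then have "ln (u+v) - ln u \<le> v / u" using up assms by (simp add: ln_div field_simps)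
  then have "u * (ln (u+v) - ln u) \<le> u * (v/u)" using up by (intro mult_left_mono) auto
  then have a: "u * ln (u+v) \<le> u * ln u + v" using up by (simp add: algebra_simps)
  have b: "v * ln (u+v) \<le> 0" using l1 assms by (simp add: mult_nonneg_nonpos)
  have "(u+v) * ln (u+v) \<le> u * ln u + v" using a b by (simp add: algebra_simps)
  then show ?thesis using up assms unfolding xlogx_def by simp
qed

lemma xlogx_sub: assumes "0 \<le> a" "a \<le> b" "b \<le> 1" "(M::real) \<ge> 1"
  shows "xlogx a - xlogx b \<le> 64 * ln M * (b - a) + 2 * inverse (M ^ 32)"
proof (cases "a = b")
  case True
  have "0 \<le> ln M" using assms by simp
  then show ?thesis using True by simp
next
  case False
  define h where "h = b - a"
  have hp: "h > 0" using False assms h_def by simp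
  have bp: "b > 0" using hp assms h_def by simp
  have key: "xlogx a - xlogx b \<le> - h * ln h"
  proof (cases "a = 0")
    case True
    then show ?thesis using bp h_def unfolding xlogx_def by simp
  next
    case False
    then have ap: "a > 0" using assms by simp
    have "ln a \<le> ln b" using ap assms by simp
    then have "a * ln a \<le> a * ln b" using ap by (intro mult_left_mono) auto
    moreover have "ln h \<le> ln b" using hp h_def assms by simp
    then have "h * ln h \<le> h * ln b" using hp by (intro mult_left_mono) auto
    moreover have "b * ln b = a * ln b + h * ln b" unfolding h_def by (simp add: algebra_simps)
    ultimately have "a * ln a - b * ln b \<le> - h * ln h" by linarith
    then show ?thesis using ap bp unfolding xlogx_def by simp
  qed
  have Mp: "M > 0" using assms by simp
  have lnM: "0 \<le> ln M" using assms by simp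
  have "- h * ln h \<le> 64 * ln M * h + 2 * inverse (M ^ 32)"
  proof (cases "h \<ge> inverse (M ^ 64)")
    case True
    have "ln (inverse (M^64)) \<le> ln h" using True hp Mp by (subst ln_le_cancel_iff) auto
    then have "- 64 * ln M \<le> ln h" using Mp by (simp add: ln_inverse ln_realpow)
    then have "- ln h \<le> 64 * ln M" by simp
    then have "h * (- ln h) \<le> h * (64 * ln M)" using hp by (intro mult_left_mono) auto
    then have "- h * ln h \<le> 64 * ln M * h" by (simp add: algebra_simps)
    moreover have "0 \<le> 2 * inverse (M ^ 32)" using Mp by simp
    ultimately show ?thesis by linarith
  next
    case False
    have sp: "sqrt h > 0" using hp by simp
    have "ln (inverse (sqrt h)) \<le> inverse (sqrt h) - 1" using sp by (intro ln_le_minus_one) auto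
    then have "- ln h / 2 \<le> inverse (sqrt h)" using hp by (simp add: ln_inverse ln_sqrt)
    then have "- ln h \<le> 2 * inverse (sqrt h)" by simp
    then have "h * (- ln h) \<le> h * (2 * inverse (sqrt h))" using hp by (intro mult_left_mono) auto
    also have "h * (2 * inverse (sqrt h)) = 2 * sqrt h"
    proof -
      have e: "h = sqrt h * sqrt h" using hp by simp
      show ?thesis using sp by (subst (1) e) (simp add: field_simps)
    qed
    also have "sqrt h \<le> sqrt (inverse (M ^ 64))" using False by simp
    also have "sqrt (inverse (M ^ 64)) = inverse (M ^ 32)"
    proof -
      have "M ^ 64 = (M ^ 32)^2" by (simp flip: power_mult)
      have "sqrt (M ^ 64) = M ^ 32" using Mp by (intro real_sqrt_unique) (simp_all flip: power_mult)
      then show ?thesis by (simp add: real_sqrt_inverse)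
    qed
    finally have "- h * ln h \<le> 2 * inverse (M ^ 32)" by simp
    moreover have "0 \<le> 64 * ln M * h" using lnM hp by simp
    ultimately show ?thesis by linarith
  qed
  then show ?thesis using key h_def by simp
qed

lemma sum_LR: "(\<Sum>e\<in>L \<times> R. f e) = (\<Sum>i\<in>L. \<Sum>j\<in>R. f (i, j))"
  by (simp add: sum.cartesian_product)

lemma construct:
  fixes L :: "'a set" and R :: "'b set"
  assumes fin: "finite L" "finite R"
    and sL: "in_simplex L dL" and sR: "in_simplex R dR"
    and sL': "in_simplex L dL'" and sR': "in_simplex R dR'"
    and fx: "feasible L R dL' dR' xp"
  shows "\<exists>x z w s. feasible L R dL dR x \<and> (\<forall>e\<in>L \<times> R. 0 \<le> z e \<and> z e \<le> xp e \<and> 0 \<le> w e \<and> x e = z e + w e)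
     \<and> (\<Sum>e\<in>L \<times> R. xp e - z e) = s \<and> (\<Sum>e\<in>L \<times> R. w e) = s \<and> 0 \<le> s
     \<and> s \<le> (\<Sum>i\<in>L. \<bar>dL i - dL' i\<bar>) + (\<Sum>j\<in>R. \<bar>dR j - dR' j\<bar>)"
proof -
  have xp0: "\<And>i j. i \<in> L \<Longrightarrow> j \<in> R \<Longrightarrow> 0 \<le> xp (i,j)" using fx unfolding feasible_def in_simplex_def by auto
  have xpsum: "(\<Sum>e\<in>L \<times> R. xp e) = 1" using fx unfolding feasible_def in_simplex_def by auto
  have xprow: "\<And>i. i \<in> L \<Longrightarrow> (\<Sum>j\<in>R. xp (i, j)) = dL' i" using fx unfolding feasible_def by auto
  have xpcol: "\<And>j. j \<in> R \<Longrightarrow> (\<Sum>i\<in>L. xp (i, j)) = dR' j" using fx unfolding feasible_def by auto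
  have dL0: "\<And>i. i \<in> L \<Longrightarrow> 0 \<le> dL i" and dL1: "sum dL L = 1" using sL unfolding in_simplex_def by auto
  have dR0: "\<And>i. i \<in> R \<Longrightarrow> 0 \<le> dR i" and dR1: "sum dR R = 1" using sR unfolding in_simplex_def by auto
  have dL'0: "\<And>i. i \<in> L \<Longrightarrow> 0 \<le> dL' i" and dL'1: "sum dL' L = 1" using sL' unfolding in_simplex_def by auto
  have dR'0: "\<And>i. i \<in> R \<Longrightarrow> 0 \<le> dR' i" and dR'1: "sum dR' R = 1" using sR' unfolding in_simplex_def by auto
  define \<alpha> where "\<alpha> i = min (dL i) (dL' i) / dL' i" for i
  define Y where "Y i j = xp (i, j) * \<alpha> i" for i j
  define cc where "cc j = (\<Sum>i\<in>L. Y i j)" for j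
  define \<beta> where "\<beta> j = min (cc j) (dR j) / cc j" for j
  define Z where "Z i j = Y i j * \<beta> j" for i j
  define r where "r i = dL i - (\<Sum>j\<in>R. Z i j)" for i
  define q where "q j = dR j - min (cc j) (dR j)" for j
  define s where "s = (\<Sum>i\<in>L. r i)"
  define W where "W i j = r i * q j / s" for i j
  define x where "x = (\<lambda>(i,j). Z i j + W i j)"
  have \<alpha>: "0 \<le> \<alpha> i \<and> \<alpha> i \<le> 1" if "i \<in> L" for i
    using dL0[OF that] dL'0[OF that] unfolding \<alpha>_def by (cases "dL' i = 0") (auto simp: field_simps)
  have Yrow: "(\<Sum>j\<in>R. Y i j) = min (dL i) (dL' i)" if "i \<in> L" for i
  proof -
    have "(\<Sum>j\<in>R. Y i j) = \<alpha> i * dL' i" unfolding Y_def using xprow[OF that]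
      by (simp add: sum_distrib_left[symmetric] mult.commute)
    then show ?thesis using dL0[OF that] dL'0[OF that] unfolding \<alpha>_def by (cases "dL' i = 0") auto
  qed
  have Y: "0 \<le> Y i j \<and> Y i j \<le> xp (i,j)" if "i \<in> L" "j \<in> R" for i j
    using \<alpha>[OF that(1)] xp0[OF that] unfolding Y_def by (simp add: mult_left_le)
  have cc: "0 \<le> cc j \<and> cc j \<le> dR' j" if "j \<in> R" for j
  proof -
    have "cc j \<le> (\<Sum>i\<in>L. xp (i,j))" unfolding cc_def using Y that by (intro sum_mono) auto
    moreover have "0 \<le> cc j" unfolding cc_def using Y that by (intro sum_nonneg) auto
    ultimately show ?thesis using xpcol[OF that] by simp
  qed
  have \<beta>: "0 \<le> \<beta> j \<and> \<beta> j \<le> 1" if "j \<in> R" for j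
    using cc[OF that] dR0[OF that] unfolding \<beta>_def by (cases "cc j = 0") (auto simp: field_simps)
  have Zcol: "(\<Sum>i\<in>L. Z i j) = min (cc j) (dR j)" if "j \<in> R" for j
  proof -
    have "(\<Sum>i\<in>L. Z i j) = \<beta> j * cc j" unfolding Z_def cc_def
      by (simp add: sum_distrib_left mult.commute)
    then show ?thesis using cc[OF that] dR0[OF that] unfolding \<beta>_def by (cases "cc j = 0") auto
  qed
  have Z: "0 \<le> Z i j \<and> Z i j \<le> Y i j" if "i \<in> L" "j \<in> R" for i j
    using \<beta>[OF that(2)] Y[OF that] unfolding Z_def by (simp add: mult_left_le)
  have r0: "0 \<le> r i" if "i \<in> L" for i
  proof -
    have "(\<Sum>j\<in>R. Z i j) \<le> (\<Sum>j\<in>R. Y i j)" using Z that by (intro sum_mono) auto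
    then show ?thesis using Yrow[OF that] unfolding r_def by linarith
  qed
  have q0: "0 \<le> q j" if "j \<in> R" for j unfolding q_def by simp
  have s0: "0 \<le> s" unfolding s_def using r0 by (intro sum_nonneg) auto
  have sumZ: "(\<Sum>i\<in>L. \<Sum>j\<in>R. Z i j) = 1 - s"
    unfolding s_def r_def using dL1 by (simp add: sum_subtractf)
  have sq: "(\<Sum>j\<in>R. q j) = s"
  proof -
    have "(\<Sum>j\<in>R. q j) = 1 - (\<Sum>j\<in>R. \<Sum>i\<in>L. Z i j)"
      unfolding q_def using dR1 Zcol by (simp add: sum_subtractf)
    also have "\<dots> = s" using sumZ sum.swap[where g="\<lambda>i j. Z i j" and A=L and B=R] by simp
    finally show ?thesis .
  qed
  have rowx: "(\<Sum>j\<in>R. x (i, j)) = dL i" if "i \<in> L" for i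
  proof (cases "s = 0")
    case True
    then have "r i = 0" using r0 fin that unfolding s_def by (simp add: sum_nonneg_eq_0_iff)
    then show ?thesis unfolding x_def W_def using r_def by simp
  next
    case False
    have "(\<Sum>j\<in>R. W i j) = r i * (\<Sum>j\<in>R. q j) / s" unfolding W_def
      by (simp add: sum_distrib_left sum_divide_distrib)
    then have "(\<Sum>j\<in>R. W i j) = r i" using sq False by simp
    then show ?thesis unfolding x_def r_def by (simp add: sum.distrib)
  qed
  have colx: "(\<Sum>i\<in>L. x (i, j)) = dR j" if "j \<in> R" for j
  proof (cases "s = 0")
    case True
    then have "q j = 0" using q0 fin that sq by (simp add: sum_nonneg_eq_0_iff)
    then have "(\<Sum>i\<in>L. Z i j) = dR j" using Zcol[OF that] unfolding q_def by simp
    then show ?thesis unfolding x_def W_def using True by simp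
  next
    case False
    have "(\<Sum>i\<in>L. W i j) = (\<Sum>i\<in>L. r i) * q j / s" unfolding W_def
      by (simp add: sum_distrib_right sum_divide_distrib)
    then have "(\<Sum>i\<in>L. W i j) = q j" using s_def False by simp
    then show ?thesis unfolding x_def q_def using Zcol[OF that] by (simp add: sum.distrib)
  qed
  have W0: "0 \<le> W i j" if "i \<in> L" "j \<in> R" for i j
    unfolding W_def using r0[OF that(1)] q0[OF that(2)] s0 by simp
  have x0: "0 \<le> x e" if "e \<in> L \<times> R" for e
    using that Z W0 unfolding x_def by (auto intro: add_nonneg_nonneg)
  have feas: "feasible L R dL dR x"
    unfolding feasible_def in_simplex_def using rowx colx x0 dL1 by (simp add: sum_LR)
  have sumW: "(\<Sum>i\<in>L. \<Sum>j\<in>R. W i j) = s"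
  proof (cases "s = 0")
    case True then show ?thesis unfolding W_def by simp
  next
    case False
    have "(\<Sum>j\<in>R. W i j) = r i" for i
    proof -
      have "(\<Sum>j\<in>R. W i j) = r i * (\<Sum>j\<in>R. q j) / s" unfolding W_def
        by (simp add: sum_distrib_left sum_divide_distrib)
      then show ?thesis using sq False by simp
    qed
    then show ?thesis using s_def by simp
  qed
  have sumd: "(\<Sum>e\<in>L \<times> R. xp e - (\<lambda>(i,j). Z i j) e) = s"
    using xpsum sumZ by (simp add: sum_subtractf sum_LR)
  have cc_sum: "(\<Sum>j\<in>R. dR' j - cc j) \<le> (\<Sum>i\<in>L. \<bar>dL i - dL' i\<bar>)"
  proof -
    have "(\<Sum>j\<in>R. dR' j - cc j) = 1 - (\<Sum>i\<in>L. \<Sum>j\<in>R. Y i j)"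
      unfolding cc_def using dR'1 sum.swap[where g="\<lambda>i j. Y i j" and A=L and B=R] by (simp add: sum_subtractf)
    also have "\<dots> = (\<Sum>i\<in>L. dL' i - min (dL i) (dL' i))"
      using Yrow dL'1 by (simp add: sum_subtractf)
    also have "\<dots> \<le> (\<Sum>i\<in>L. \<bar>dL i - dL' i\<bar>)" by (intro sum_mono) auto
    finally show ?thesis .
  qed
  have "s \<le> (\<Sum>j\<in>R. \<bar>dR j - dR' j\<bar> + (dR' j - cc j))"
    unfolding sq[symmetric] q_def
  proof (intro sum_mono)
    fix j assume "j \<in> R"
    then have "cc j \<le> dR' j" using cc by auto
    then show "dR j - min (cc j) (dR j) \<le> \<bar>dR j - dR' j\<bar> + (dR' j - cc j)" by (simp add: min_def abs_if)
  qed
  also have "\<dots> \<le> (\<Sum>i\<in>L. \<bar>dL i - dL' i\<bar>) + (\<Sum>j\<in>R. \<bar>dR j - dR' j\<bar>)"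
    using cc_sum by (simp add: sum.distrib)
  finally have sle: "s \<le> (\<Sum>i\<in>L. \<bar>dL i - dL' i\<bar>) + (\<Sum>j\<in>R. \<bar>dR j - dR' j\<bar>)" .
  have ZX: "Z i j \<le> xp (i,j)" if "i \<in> L" "j \<in> R" for i j using Z[OF that] Y[OF that] by linarith
  show ?thesis
    apply (rule exI[of _ x], rule exI[of _ "\<lambda>(i,j). Z i j"], rule exI[of _ "\<lambda>(i,j). W i j"], rule exI[of _ s])
    using feas sumd sumW s0 sle Z ZX W0 unfolding x_def by (auto simp: sum_LR)
qed

lemma obj_lb:
  assumes "finite L" "finite R" "\<mu> \<ge> 0" "\<forall>e\<in>L \<times> R. c e \<ge> 0" "feasible L R dL dR x"
  shows "objective L R c \<mu> x \<ge> - \<mu> * real (card (L \<times> R))"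
proof -
  have x0: "\<forall>e\<in>L\<times>R. 0 \<le> x e" using assms(5) unfolding feasible_def in_simplex_def by auto
  have "(\<Sum>e\<in>L \<times> R. c e * x e) \<ge> 0" using x0 assms(4) by (intro sum_nonneg) auto
  moreover have "negent L R x \<ge> (\<Sum>e\<in>L \<times> R. -1)" unfolding negent_def
    using x0 xlogx_ge by (intro sum_mono) auto
  then have "negent L R x \<ge> - real (card (L \<times> R))" by simp
  then have "\<mu> * negent L R x \<ge> \<mu> * (- real (card (L \<times> R)))" using assms(3) by (intro mult_left_mono) auto
  ultimately show ?thesis unfolding objective_def by simp
qed

lemma bdd: assumes "finite L" "finite R" "\<mu> \<ge> 0" "\<forall>e\<in>L \<times> R. c e \<ge> 0"
  shows "bdd_below (objective L R c \<mu> ` {x. feasible L R dL dR x})"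
  using obj_lb[OF assms] by (intro bdd_belowI[of _ "- \<mu> * real (card (L \<times> R))"]) auto

lemma nonempty: assumes "finite L" "finite R" "in_simplex L dL" "in_simplex R dR"
  shows "{x. feasible L R dL dR x} \<noteq> {}"
proof -
  have "feasible L R dL dR (\<lambda>(i,j). dL i * dR j)"
    using assms unfolding feasible_def in_simplex_def
    by (auto simp: sum_LR sum_distrib_left[symmetric] sum_distrib_right[symmetric])
  then show ?thesis by blast
qed

theorem mainTheorem12:
  fixes L :: "'a set" and R :: "'b set"
    and c :: "'a \<times> 'b \<Rightarrow> real" and \<mu> :: real
    and dL dL' :: "'a \<Rightarrow> real" and dR dR' :: "'b \<Rightarrow> real"
  assumes "finite L" "L \<noteq> {}" "finite R" "R \<noteq> {}"
    and "card L * card R \<ge> 3"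
    and "\<mu> \<ge> 0"
    and "\<forall>e\<in>L \<times> R. c e \<ge> 0"
    and "in_simplex L dL" "in_simplex R dR"
    and "in_simplex L dL'" "in_simplex R dR'"
  shows "OPT L R c \<mu> dL dR \<le> OPT L R c \<mu> dL' dR'
      + (2 * (MAX e\<in>L \<times> R. \<bar>c e\<bar>) + 66 * \<mu> * ln (real (card L * card R)))
        * ((\<Sum>i\<in>L. \<bar>dL i - dL' i\<bar>) + (\<Sum>j\<in>R. \<bar>dR j - dR' j\<bar>))
      + \<mu> * inverse (real (card L * card R) ^ 30)"
proof -
  define M where "M = real (card L * card R)"
  define Cm where "Cm = (MAX e\<in>L \<times> R. \<bar>c e\<bar>)"
  define \<delta> where "\<delta> = (\<Sum>i\<in>L. \<bar>dL i - dL' i\<bar>) + (\<Sum>j\<in>R. \<bar>dR j - dR' j\<bar>)"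
  define B where "B = (2 * Cm + 66 * \<mu> * ln M) * \<delta> + \<mu> * inverse (M ^ 30)"
  have finLR: "finite (L \<times> R)" using assms by simp
  have neLR: "L \<times> R \<noteq> {}" using assms by simp
  have cardLR: "real (card (L \<times> R)) = M" unfolding M_def by (simp add: card_cartesian_product)
  have M3: "M \<ge> 3" unfolding M_def using assms(5) by linarith
  have lnM: "ln M \<ge> 1"
  proof -
    have "exp 1 \<le> M" using exp_le M3 by linarith
    then show ?thesis using M3 by (subst ln_ge_iff) auto
  qed
  have Cm: "c e \<le> Cm" if "e \<in> L \<times> R" for e
  proof -
    have "\<bar>c e\<bar> \<le> Cm" unfolding Cm_def using finLR that by (intro Max_ge) auto
    then show ?thesis by simp
  qed
  have Cm0: "0 \<le> Cm" using Cm assms(7) neLR by (meson all_not_in_conv order_trans)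
  have \<delta>0: "0 \<le> \<delta>" unfolding \<delta>_def by (intro add_nonneg_nonneg sum_nonneg) auto
  have key: "OPT L R c \<mu> dL dR \<le> objective L R c \<mu> xp + B" if fxp: "feasible L R dL' dR' xp" for xp
  proof -
    obtain x z w s where fx: "feasible L R dL dR x"
      and zw: "\<forall>e\<in>L \<times> R. 0 \<le> z e \<and> z e \<le> xp e \<and> 0 \<le> w e \<and> x e = z e + w e"
      and sd: "(\<Sum>e\<in>L \<times> R. xp e - z e) = s" and sw: "(\<Sum>e\<in>L \<times> R. w e) = s" and s0: "0 \<le> s"
      and sle: "s \<le> \<delta>"
      using construct[OF assms(1,3,8,9,10,11) fxp] unfolding \<delta>_def by blast
    have le1: "f e \<le> 1" if "e \<in> L \<times> R" "feasible L R a b f" for e f a b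
    proof -
      have "f e \<le> (\<Sum>e\<in>L \<times> R. f e)" using that finLR unfolding feasible_def in_simplex_def
        by (intro member_le_sum) auto
      then show ?thesis using that unfolding feasible_def in_simplex_def by simp
    qed
    have OPTx: "OPT L R c \<mu> dL dR \<le> objective L R c \<mu> x"
      unfolding OPT_def using fx bdd[OF assms(1,3,6,7)] by (intro cInf_lower) auto
    have c1: "(\<Sum>e\<in>L \<times> R. c e * x e) \<le> (\<Sum>e\<in>L \<times> R. c e * xp e + Cm * w e)"
    proof (intro sum_mono)
      fix e assume e: "e \<in> L \<times> R"
      have "c e * z e \<le> c e * xp e" using zw e assms(7) by (intro mult_left_mono) auto
      moreover have "c e * w e \<le> Cm * w e" using zw e Cm by (intro mult_right_mono) auto
      moreover have "x e = z e + w e" using zw e by blast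
      ultimately show "c e * x e \<le> c e * xp e + Cm * w e" by (simp add: distrib_left)
    qed
    have c2: "(\<Sum>e\<in>L \<times> R. c e * x e) \<le> (\<Sum>e\<in>L \<times> R. c e * xp e) + Cm * s"
      using c1 sw by (simp add: sum.distrib sum_distrib_left[symmetric])
    have h1: "negent L R x \<le> (\<Sum>e\<in>L \<times> R. xlogx (z e) + w e)" unfolding negent_def
    proof (intro sum_mono)
      fix e assume e: "e \<in> L \<times> R"
      have "x e \<le> 1" using le1[OF e fx] .
      then show "xlogx (x e) \<le> xlogx (z e) + w e" using zw e xlogx_add[of "z e" "w e"] by auto
    qed
    have h2: "(\<Sum>e\<in>L \<times> R. xlogx (z e)) \<le> (\<Sum>e\<in>L \<times> R. xlogx (xp e) + (64 * ln M * (xp e - z e) + 2 * inverse (M ^ 32)))"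
    proof (intro sum_mono)
      fix e assume e: "e \<in> L \<times> R"
      have "xp e \<le> 1" using le1[OF e fxp] .
      then show "xlogx (z e) \<le> xlogx (xp e) + (64 * ln M * (xp e - z e) + 2 * inverse (M ^ 32))"
        using zw e xlogx_sub[of "z e" "xp e" M] M3 by auto
    qed
    have h3: "negent L R x \<le> negent L R xp + s + 64 * ln M * s + M * (2 * inverse (M ^ 32))"
    proof -
      have "(\<Sum>e\<in>L \<times> R. 64 * ln M * (xp e - z e)) = 64 * ln M * s"
        using sd by (simp add: sum_distrib_left[symmetric])
      then show ?thesis using h1 h2 sw cardLR unfolding negent_def by (simp add: sum.distrib)
    qed
    have e1: "Cm * s \<le> 2 * Cm * \<delta>" using Cm0 s0 sle by (metis mult_left_mono mult_2 le_add_same_cancel2 mult.assoc mult_nonneg_nonneg order_trans distrib_right)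
    have e2: "s + 64 * ln M * s \<le> 66 * ln M * \<delta>"
    proof -
      have "s + 64 * ln M * s \<le> 65 * ln M * s" using lnM s0 by (simp add: algebra_simps mult_left_mono[of 1 "ln M" s, simplified])
      also have "\<dots> \<le> 65 * ln M * \<delta>" using lnM sle by (intro mult_left_mono) auto
      also have "\<dots> \<le> 66 * ln M * \<delta>" using lnM \<delta>0 by (intro mult_right_mono) auto
      finally show ?thesis .
    qed
    have e3: "M * (2 * inverse (M ^ 32)) \<le> inverse (M ^ 30)"
    proof -
      have p: "M ^ 32 = M * M * M ^ 30" using power_add[of M 2 30] by (simp add: power2_eq_square)
      have "M * (2 * inverse (M ^ 32)) = 2 / M * inverse (M ^ 30)" using M3
        by (simp add: p field_simps)
      also have "\<dots> \<le> 1 * inverse (M ^ 30)" using M3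
        by (intro mult_right_mono) (auto simp: field_simps)
      finally show ?thesis by simp
    qed
    have "\<mu> * negent L R x \<le> \<mu> * (negent L R xp + 66 * ln M * \<delta> + inverse (M ^ 30))"
      using h3 e2 e3 assms(6) by (intro mult_left_mono) auto
    then have "objective L R c \<mu> x \<le> objective L R c \<mu> xp + B"
      unfolding objective_def B_def using c2 e1 by (simp add: algebra_simps)
    then show ?thesis using OPTx by linarith
  qed
  have "OPT L R c \<mu> dL dR - B \<le> OPT L R c \<mu> dL' dR'"
    unfolding OPT_def[of L R c \<mu> dL' dR']
    using nonempty[OF assms(1,3,10,11)] key by (intro cInf_greatest) (auto simp: algebra_simps)
  then show ?thesis unfolding B_def M_def Cm_def \<delta>_def by linarith
qed

end
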